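(* The set $\mathcal N$ is exactly the set of all words over $A$ of the form $x^{i_n}y^{\epsilon_n}\cdots x^{i_1}y^{\epsilon_1}x^{i_0}$ such that $n\ge 0$, each $\epsilon_j\in\{\pm1\}$, each $i_j\in\mathbb Z$, and for every $j\in\{1,\dots,n-1\}$: (1) if $i_j=0$ then $\epsilon_j=\epsilon_{j+1}$; (2) if $\epsilon_j=1$ then $i_j\le 0$; (3) if $\epsilon_j=-1$ then $i_j\le 1$.
   Context: Let $A=\{x^{\pm1},y^{\pm1}\}$ (generators of Thompson's group $F$, $x=x_0$, $y=x_1$). Guba and Sapir's rewriting system $\Sigma$ consists of the rules $aa^{-1}\to\emptyset$ for $a\in A$, $y^\epsilon x^iy\to x^iyx^{-i-1}y^\epsilon x^{i+1}$ and $y^\epsilon x^{i+1}y^{-1}\to x^{i+1}y^{-1}x^{-i}y^\epsilon x^i$ for $\epsilon\in\{1,-1\}$, $i\ge1$. $\mathcal N$ is the set of words over $A$ irreducible with respect to $\Sigma$, i.e. words containing no subword $aa^{-1}$, $y^\epsilon x^iy$, or $y^\epsilon x^{i+1}y^{-1}$ ($\epsilon=\pm1$, $i\ge1$). *)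

theory Defs
  imports Main
begin

datatype letter = X | Xinv | Y | Yinv

fun linv :: "letter \<Rightarrow> letter" where
  "linv X = Xinv" | "linv Xinv = X" | "linv Y = Yinv" | "linv Yinv = Y"

definition ylet :: "int \<Rightarrow> letter" where
  "ylet e = (if e = 1 then Y else Yinv)"

definition xpow :: "int \<Rightarrow> letter list" where
  "xpow i = (if i \<ge> 0 then replicate (nat i) X else replicate (nat (- i)) Xinv)"

definition subword :: "letter list \<Rightarrow> letter list \<Rightarrow> bool" where
  "subword u w \<longleftrightarrow> (\<exists>p q. w = p @ u @ q)"

text \<open>Irreducibility with respect to the Guba--Sapir rewriting system Sigma:
  no subword a a^-1, y^e x^i y, or y^e x^(i+1) y^-1 (e = +-1, i >= 1).\<close>
definition irreducible_GS :: "letter list \<Rightarrow> bool" where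
  "irreducible_GS w \<longleftrightarrow>
     (\<forall>a. \<not> subword [a, linv a] w) \<and>
     (\<forall>e i. e \<in> {1, -1} \<and> i \<ge> 1 \<longrightarrow> \<not> subword ([ylet e] @ xpow i @ [Y]) w) \<and>
     (\<forall>e i. e \<in> {1, -1} \<and> i \<ge> 1 \<longrightarrow> \<not> subword ([ylet e] @ xpow (i + 1) @ [Yinv]) w)"

definition NN :: "letter list set" where
  "NN = {w. irreducible_GS w}"

fun nf_word :: "nat \<Rightarrow> (nat \<Rightarrow> int) \<Rightarrow> (nat \<Rightarrow> int) \<Rightarrow> letter list" where
  "nf_word 0 eps i = xpow (i 0)"
| "nf_word (Suc n) eps i = xpow (i (Suc n)) @ [ylet (eps (Suc n))] @ nf_word n eps i"

end

theory Submission
  imports Defs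
begin

definition good :: "nat \<Rightarrow> (nat \<Rightarrow> int) \<Rightarrow> (nat \<Rightarrow> int) \<Rightarrow> bool" where
  "good n eps i \<longleftrightarrow> (\<forall>j\<in>{1..n}. eps j \<in> {1, -1}) \<and>
            (\<forall>j\<in>{1..n-1}.
               (i j = 0 \<longrightarrow> eps j = eps (j + 1)) \<and>
               (eps j = 1 \<longrightarrow> i j \<le> 0) \<and>
               (eps j = -1 \<longrightarrow> i j \<le> 1))"

definition bad_head :: "letter list \<Rightarrow> bool" where
  "bad_head s \<longleftrightarrow> (\<exists>a q. s = [a, linv a] @ q) \<or>
     (\<exists>e i q. e \<in> {1, -1} \<and> i \<ge> 1 \<and> s = ([ylet e] @ xpow i @ [Y]) @ q) \<or>
     (\<exists>e i q. e \<in> {1, -1} \<and> i \<ge> 1 \<and> s = ([ylet e] @ xpow (i + 1) @ [Yinv]) @ q)"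

lemma subword_Cons: "subword u (a # w) \<longleftrightarrow> (\<exists>q. a # w = u @ q) \<or> subword u w"
  unfolding subword_def
proof
  assume "\<exists>p q. a # w = p @ u @ q"
  then obtain p q where h: "a # w = p @ u @ q" by blast
  show "(\<exists>q. a # w = u @ q) \<or> (\<exists>p q. w = p @ u @ q)"
  proof (cases p)
    case Nil then show ?thesis using h by auto
  next
    case (Cons b p') then show ?thesis using h by auto
  qed
next
  assume "(\<exists>q. a # w = u @ q) \<or> (\<exists>p q. w = p @ u @ q)"
  then show "\<exists>p q. a # w = p @ u @ q"
  proof
    assume "\<exists>q. a # w = u @ q" then show ?thesis by (metis append_Nil)
  next
    assume "\<exists>p q. w = p @ u @ q" then obtain p q where "w = p @ u @ q" by blast
    then have "a # w = (a # p) @ u @ q" by simp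
    then show ?thesis by blast
  qed
qed

lemma irr_Nil: "irreducible_GS []"
  unfolding irreducible_GS_def subword_def by auto

lemma aux1: "(\<forall>x. \<not>(A x \<or> B x)) = ((\<forall>x. \<not> B x) \<and> \<not>(\<exists>x. A x))" by blast
lemma aux2: "(\<forall>e i. C e i \<longrightarrow> \<not>(A e i \<or> B e i)) =
   ((\<forall>e i. C e i \<longrightarrow> \<not> B e i) \<and> \<not>(\<exists>e i. C e i \<and> A e i))" by blast

lemma irr_Cons: "irreducible_GS (a # w) \<longleftrightarrow> irreducible_GS w \<and> \<not> bad_head (a # w)"
proof -
  have e1: "(\<forall>b. \<not> subword [b, linv b] (a#w)) = ((\<forall>b. \<not> subword [b, linv b] w) \<and> \<not>(\<exists>b q. a#w = [b, linv b]@q))"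
    unfolding subword_Cons by meson
  have e2: "(\<forall>e i. e \<in> {1, -1} \<and> i \<ge> 1 \<longrightarrow> \<not> subword ([ylet e] @ xpow i @ [Y]) (a#w)) =
     ((\<forall>e i. e \<in> {1, -1} \<and> i \<ge> 1 \<longrightarrow> \<not> subword ([ylet e] @ xpow i @ [Y]) w) \<and>
      \<not>(\<exists>e i q. e \<in> {1, -1} \<and> i \<ge> 1 \<and> a#w = ([ylet e] @ xpow i @ [Y]) @ q))"
    unfolding subword_Cons by meson
  have e3: "(\<forall>e i. e \<in> {1, -1} \<and> i \<ge> 1 \<longrightarrow> \<not> subword ([ylet e] @ xpow (i+1) @ [Yinv]) (a#w)) =
     ((\<forall>e i. e \<in> {1, -1} \<and> i \<ge> 1 \<longrightarrow> \<not> subword ([ylet e] @ xpow (i+1) @ [Yinv]) w) \<and>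
      \<not>(\<exists>e i q. e \<in> {1, -1} \<and> i \<ge> 1 \<and> a#w = ([ylet e] @ xpow (i+1) @ [Yinv]) @ q))"
    unfolding subword_Cons by meson
  show ?thesis unfolding irreducible_GS_def bad_head_def e1 e2 e3 by meson
qed

lemma xpow0[simp]: "xpow 0 = []" by (simp add: xpow_def)

lemma xpow_pos: "i \<ge> 1 \<Longrightarrow> xpow i = replicate (nat i) X"
  unfolding xpow_def by simp

lemma ylet_cases: "e \<in> {1, -1} \<Longrightarrow> ylet e = Y \<or> ylet e = Yinv"
  unfolding ylet_def by auto

lemma bad_head_iff: "bad_head s \<longleftrightarrow> (\<exists>a q. s = a # linv a # q) \<or>
   (\<exists>z k q. z \<in> {Y,Yinv} \<and> k \<ge> 1 \<and> s = z # replicate k X @ Y # q) \<or>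
   (\<exists>z k q. z \<in> {Y,Yinv} \<and> k \<ge> 2 \<and> s = z # replicate k X @ Yinv # q)"
proof
  assume "bad_head s"
  then consider "(\<exists>a q. s = [a, linv a] @ q)" |
     "(\<exists>e i q. e \<in> {1, -1} \<and> i \<ge> 1 \<and> s = ([ylet e] @ xpow i @ [Y]) @ q)" |
     "(\<exists>e i q. e \<in> {1, -1} \<and> i \<ge> 1 \<and> s = ([ylet e] @ xpow (i + 1) @ [Yinv]) @ q)"
    unfolding bad_head_def by blast
  then show "(\<exists>a q. s = a # linv a # q) \<or>
   (\<exists>z k q. z \<in> {Y,Yinv} \<and> k \<ge> 1 \<and> s = z # replicate k X @ Y # q) \<or>
   (\<exists>z k q. z \<in> {Y,Yinv} \<and> k \<ge> 2 \<and> s = z # replicate k X @ Yinv # q)"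
  proof cases
    case 1 then show ?thesis by auto
  next
    case 2
    then obtain e i q where h: "e \<in> {1, -1}" "i \<ge> 1" "s = ([ylet e] @ xpow i @ [Y]) @ q" by blast
    have "ylet e \<in> {Y, Yinv}" using ylet_cases[OF h(1)] by auto
    moreover have "nat i \<ge> 1" using h(2) by simp
    moreover have "s = ylet e # replicate (nat i) X @ Y # q" using h xpow_pos by simp
    ultimately show ?thesis by blast
  next
    case 3
    then obtain e i q where h: "e \<in> {1, -1}" "i \<ge> 1" "s = ([ylet e] @ xpow (i+1) @ [Yinv]) @ q" by blast
    have "ylet e \<in> {Y, Yinv}" using ylet_cases[OF h(1)] by auto
    moreover have "nat (i+1) \<ge> 2" using h(2) by simp
    moreover have "s = ylet e # replicate (nat (i+1)) X @ Yinv # q" using h xpow_pos[of "i+1"] by simp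
    ultimately show ?thesis by blast
  qed
next
  assume "(\<exists>a q. s = a # linv a # q) \<or>
   (\<exists>z k q. z \<in> {Y,Yinv} \<and> k \<ge> 1 \<and> s = z # replicate k X @ Y # q) \<or>
   (\<exists>z k q. z \<in> {Y,Yinv} \<and> k \<ge> 2 \<and> s = z # replicate k X @ Yinv # q)"
  then consider "(\<exists>a q. s = a # linv a # q)" |
   "(\<exists>z k q. z \<in> {Y,Yinv} \<and> k \<ge> 1 \<and> s = z # replicate k X @ Y # q)" |
   "(\<exists>z k q. z \<in> {Y,Yinv} \<and> k \<ge> 2 \<and> s = z # replicate k X @ Yinv # q)" by blast
  then show "bad_head s"
  proof cases
    case 1 then show ?thesis unfolding bad_head_def by auto
  next
    case 2
    then obtain z k q where h: "z \<in> {Y,Yinv}" "k \<ge> 1" "s = z # replicate k X @ Y # q" by blast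
    define e :: int where "e = (if z = Y then 1 else -1)"
    have "ylet e = z" using h(1) unfolding e_def ylet_def by auto
    moreover have "xpow (int k) = replicate k X" using h(2) xpow_pos[of "int k"] by simp
    ultimately have "e \<in> {1,-1} \<and> int k \<ge> 1 \<and> s = ([ylet e] @ xpow (int k) @ [Y]) @ q"
      using h unfolding e_def by auto
    then show ?thesis unfolding bad_head_def by blast
  next
    case 3
    then obtain z k q where h: "z \<in> {Y,Yinv}" "k \<ge> 2" "s = z # replicate k X @ Yinv # q" by blast
    define e :: int where "e = (if z = Y then 1 else -1)"
    have "ylet e = z" using h(1) unfolding e_def ylet_def by auto
    moreover have "xpow (int k - 1 + 1) = replicate k X" using h(2) xpow_pos[of "int k"] by simp
    ultimately have "e \<in> {1,-1} \<and> int k - 1 \<ge> 1 \<and> s = ([ylet e] @ xpow (int k - 1 + 1) @ [Yinv]) @ q"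
      using h unfolding e_def by auto
    then show ?thesis unfolding bad_head_def by blast
  qed
qed

lemma set_xpow: "set (xpow c) \<subseteq> {X, Xinv}"
  unfolding xpow_def by auto

lemma xpow_neg: assumes "c < 0" shows "\<exists>t. xpow c = Xinv # t"
proof -
  obtain k where "nat (-c) = Suc k" using assms by (cases "nat (-c)") auto
  then show ?thesis using assms unfolding xpow_def by simp
qed

lemma xpow_pos': assumes "c > 0" shows "\<exists>t. xpow c = X # t"
proof -
  obtain k where "nat c = Suc k" using assms by (cases "nat c") auto
  then show ?thesis using assms unfolding xpow_def by simp
qed

lemma rep_app_eq: "z \<noteq> X \<Longrightarrow> z' \<noteq> X \<Longrightarrow> replicate a X @ z' # t' = replicate b X @ z # t
   \<Longrightarrow> a = b \<and> z' = z"
proof (induction a arbitrary: b)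
  case 0 then show ?case by (cases b) simp_all
next
  case (Suc a)
  show ?case
  proof (cases b)
    case 0 then show ?thesis using Suc.prems by simp
  next
    case (Suc b')
    then have "replicate a X @ z' # t' = replicate b' X @ z # t" using Suc.prems by simp
    then show ?thesis using Suc.IH[of b'] Suc.prems Suc by simp
  qed
qed

lemma rep_eq: assumes a: "z \<noteq> X" "z' \<noteq> X" "k \<ge> 1" "xpow c @ z' # W' = replicate k X @ z # q"
  shows "c = int k \<and> z' = z"
proof (cases "c \<ge> 0")
  case True
  then have "replicate (nat c) X @ z' # W' = replicate k X @ z # q" using a(4) unfolding xpow_def by simp
  then have "nat c = k \<and> z' = z" using rep_app_eq[OF a(1) a(2)] by blast
  then show ?thesis using True by auto
next
  case False
  then obtain t where t: "xpow c = Xinv # t" using xpow_neg by force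
  obtain k'' where "k = Suc k''" using a(3) by (cases k) auto
  then show ?thesis using a(4) t by simp
qed

fun nf_rest :: "nat \<Rightarrow> (nat \<Rightarrow> int) \<Rightarrow> (nat \<Rightarrow> int) \<Rightarrow> letter list" where
  "nf_rest 0 eps i = []"
| "nf_rest (Suc n) eps i = [ylet (eps (Suc n))] @ nf_word n eps i"

lemma nf_split: "nf_word n eps i = xpow (i n) @ nf_rest n eps i"
  by (cases n) auto

lemma nf_cong: "(\<forall>j\<le>m. eps j = eps' j \<and> i j = i' j) \<Longrightarrow> nf_word m eps i = nf_word m eps' i'"
  by (induction m) auto

lemma nf_rest_upd: "nf_rest n eps (i(n := c)) = nf_rest n eps i"
  by (cases n) (auto intro!: nf_cong)

lemma nf_upd: "nf_word n eps (i(n := c)) = xpow c @ nf_rest n eps i"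
  using nf_split[of n eps "i(n := c)"] nf_rest_upd by simp

lemma good_upd: "good n eps (i(n := c)) = good n eps i"
proof -
  have h: "\<And>j. j \<in> {1..n-1} \<Longrightarrow> (i(n:=c)) j = i j"
  proof -
    fix j :: nat assume "j \<in> {1..n-1}"
    then have "j \<noteq> n" by (simp add: atLeastAtMost_iff, linarith)
    then show "(i(n:=c)) j = i j" by simp
  qed
  show ?thesis unfolding good_def
    by (intro conj_cong refl ball_cong) (simp_all only: h)
qed

lemma xpow_X: "c \<ge> 0 \<Longrightarrow> X # xpow c = xpow (c + 1)"
  unfolding xpow_def by (simp add: nat_add_distrib)

lemma xpow_Xinv: assumes "c \<le> 0" shows "Xinv # xpow c = xpow (c - 1)"
proof -
  have "nat (1 - c) = Suc (nat (- c))" using Suc_nat_eq_nat_zadd1[of "-c"] assms by simp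
  then show ?thesis unfolding xpow_def using assms by auto
qed

lemma bad_head_X:
  assumes "a \<noteq> Y" "a \<noteq> Yinv" "\<And>q. L \<noteq> linv a # q"
  shows "\<not> bad_head (a # L)"
proof -
  have 1: "\<not>(\<exists>b q. a # L = b # linv b # q)" using assms(3) by simp
  have 2: "\<not>(\<exists>z k q. z \<in> {Y,Yinv} \<and> k \<ge> 1 \<and> a # L = z # replicate k X @ Y # q)" using assms(1,2) by simp
  have 3: "\<not>(\<exists>z k q. z \<in> {Y,Yinv} \<and> k \<ge> 2 \<and> a # L = z # replicate k X @ Yinv # q)" using assms(1,2) by simp
  show ?thesis unfolding bad_head_iff using 1 2 3 by blast
qed

lemma irr_rep:
  assumes "irreducible_GS (z # W)" "z \<in> {Y, Yinv}"
  shows "irreducible_GS (replicate k X @ z # W) \<and> irreducible_GS (replicate k Xinv @ z # W)"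
proof (induction k)
  case 0 then show ?case using assms by simp
next
  case (Suc k)
  have "\<And>q. replicate k X @ z # W \<noteq> linv X # q" using assms(2) by (cases k) auto
  then have "\<not> bad_head (X # replicate k X @ z # W)" by (intro bad_head_X) auto
  moreover have "\<And>q. replicate k Xinv @ z # W \<noteq> linv Xinv # q" using assms(2) by (cases k) auto
  then have "\<not> bad_head (Xinv # replicate k Xinv @ z # W)" by (intro bad_head_X) auto
  ultimately show ?case using Suc irr_Cons by simp
qed

lemma irr_rep0:
  "irreducible_GS (replicate k X) \<and> irreducible_GS (replicate k Xinv)"
proof (induction k)
  case 0 then show ?case using irr_Nil by simp
next
  case (Suc k)
  have "\<And>q. replicate k X \<noteq> linv X # q" by (cases k) auto
  then have "\<not> bad_head (X # replicate k X)" by (intro bad_head_X) auto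
  moreover have "\<And>q. replicate k Xinv \<noteq> linv Xinv # q" by (cases k) auto
  then have "\<not> bad_head (Xinv # replicate k Xinv)" by (intro bad_head_X) auto
  ultimately show ?case using Suc irr_Cons by simp
qed

lemma irr_xpow: "irreducible_GS (xpow c)"
  unfolding xpow_def using irr_rep0 by simp

lemma irr_xpow_app: "irreducible_GS (z # W) \<Longrightarrow> z \<in> {Y, Yinv} \<Longrightarrow> irreducible_GS (xpow c @ z # W)"
  unfolding xpow_def using irr_rep by simp

lemma good_Suc: "good (Suc n) eps i \<Longrightarrow> good n eps i"
  unfolding good_def by auto

lemma ylet_Y: "e \<in> {1,-1} \<Longrightarrow> ylet e = Y \<longleftrightarrow> e = 1"
  unfolding ylet_def by auto
lemma ylet_Yinv: "e \<in> {1,-1} \<Longrightarrow> ylet e = Yinv \<longleftrightarrow> e = -1"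
  unfolding ylet_def by auto

lemma head_ok:
  assumes g: "good (Suc m) eps i"
  shows "\<not> bad_head (ylet (eps (Suc m)) # nf_word m eps i)"
proof (cases m)
  case 0
  have e: "eps (Suc m) \<in> {1,-1}" using g unfolding good_def by auto
  have z: "ylet (eps (Suc m)) \<in> {Y, Yinv}" using ylet_cases[OF e] by auto
  show ?thesis unfolding bad_head_iff 0
  proof (intro notI)
    assume "(\<exists>a q. ylet (eps (Suc 0)) # nf_word 0 eps i = a # linv a # q) \<or>
      (\<exists>z k q. z \<in> {Y, Yinv} \<and> 1 \<le> k \<and> ylet (eps (Suc 0)) # nf_word 0 eps i = z # replicate k X @ Y # q) \<or>
      (\<exists>z k q. z \<in> {Y, Yinv} \<and> 2 \<le> k \<and> ylet (eps (Suc 0)) # nf_word 0 eps i = z # replicate k X @ Yinv # q)"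
    then consider q where "xpow (i 0) = linv (ylet (eps (Suc 0))) # q"
      | k q where "xpow (i 0) = replicate k X @ Y # q"
      | k q where "xpow (i 0) = replicate k X @ Yinv # q"
      by auto
    then have "Y \<in> set (xpow (i 0)) \<or> Yinv \<in> set (xpow (i 0))"
    proof cases
      case 1 then show ?thesis using z 0 by (cases "ylet (eps (Suc 0))") auto
    qed auto
    then show False using set_xpow[of "i 0"] by auto
  qed
next
  case (Suc p)
  define e where "e = eps (Suc m)"
  define e' where "e' = eps m"
  define c where "c = i m"
  define W' where "W' = nf_word p eps i"
  have ee: "e \<in> {1,-1}" "e' \<in> {1,-1}" using g Suc unfolding good_def e_def e'_def by auto
  have cond: "c = 0 \<longrightarrow> e' = e" "e' = 1 \<longrightarrow> c \<le> 0" "e' = -1 \<longrightarrow> c \<le> 1"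
    using g Suc unfolding good_def e_def e'_def c_def by (auto dest!: bspec[of _ _ m])
  have W: "nf_word m eps i = xpow c @ ylet e' # W'" unfolding Suc W'_def c_def e'_def by simp
  have zz: "ylet e \<in> {Y,Yinv}" "ylet e' \<in> {Y,Yinv}" using ylet_cases ee by auto
  show ?thesis unfolding W e_def[symmetric] bad_head_iff
  proof (intro notI)
    assume "(\<exists>a q. ylet e # xpow c @ ylet e' # W' = a # linv a # q) \<or>
      (\<exists>z k q. z \<in> {Y, Yinv} \<and> 1 \<le> k \<and> ylet e # xpow c @ ylet e' # W' = z # replicate k X @ Y # q) \<or>
      (\<exists>z k q. z \<in> {Y, Yinv} \<and> 2 \<le> k \<and> ylet e # xpow c @ ylet e' # W' = z # replicate k X @ Yinv # q)"
    then consider q where "xpow c @ ylet e' # W' = linv (ylet e) # q"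
      | k q where "1 \<le> k" "xpow c @ ylet e' # W' = replicate k X @ Y # q"
      | k q where "2 \<le> k" "xpow c @ ylet e' # W' = replicate k X @ Yinv # q"
      by auto
    then show False
    proof cases
      case 1
      show False
      proof (cases "c = 0")
        case True
        then have "ylet e' = linv (ylet e)" using 1 unfolding xpow_def by simp
        then show False using cond(1) True zz by auto
      next
        case False
        then obtain t where "xpow c = X # t \<or> xpow c = Xinv # t"
          using xpow_neg xpow_pos' by (meson linorder_neqE)
        then show False using 1 zz by auto
      qed
    next
      case 2
      have "c = int k \<and> ylet e' = Y" using rep_eq[OF _ _ 2(1) 2(2)] zz by auto
      then show False using cond(2) ylet_Y[OF ee(2)] 2(1) by auto
    next
      case 3
      have "c = int k \<and> ylet e' = Yinv" using rep_eq[OF _ _ _ 3(2)] 3(1) zz by auto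
      then show False using cond(3) ylet_Yinv[OF ee(2)] 3(1) by auto
    qed
  qed
qed

lemma dirA: "good n eps i \<Longrightarrow> irreducible_GS (nf_word n eps i)"
proof (induction n)
  case 0 then show ?case using irr_xpow by simp
next
  case (Suc m)
  have "irreducible_GS (nf_word m eps i)" using Suc good_Suc by blast
  moreover have "\<not> bad_head (ylet (eps (Suc m)) # nf_word m eps i)" using head_ok Suc by blast
  ultimately have "irreducible_GS (ylet (eps (Suc m)) # nf_word m eps i)" using irr_Cons by blast
  moreover have "ylet (eps (Suc m)) \<in> {Y, Yinv}" unfolding ylet_def by auto
  ultimately show ?case using irr_xpow_app by simp
qed

lemma dirB_y:
  assumes g: "good n eps i" and w: "w = nf_word n eps i" and nb: "\<not> bad_head (ylet e # w)"
    and e: "e \<in> {1,-1}"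
  shows "\<exists>n eps i. good n eps i \<and> ylet e # w = nf_word n eps i"
proof -
  define eps' where "eps' = eps(Suc n := e)"
  define i' where "i' = i(Suc n := 0)"
  have "nf_word n eps' i' = nf_word n eps i"
    unfolding eps'_def i'_def by (rule nf_cong) auto
  then have eq: "ylet e # w = nf_word (Suc n) eps' i'"
    using w unfolding xpow_def by (simp add: eps'_def i'_def)
  have "good (Suc n) eps' i'"
    unfolding good_def
  proof (rule conjI; rule ballI)
    fix j assume "j \<in> {1..Suc n}"
    then show "eps' j \<in> {1,-1}" using g e unfolding good_def eps'_def by auto
  next
    fix j assume j: "j \<in> {1..Suc n - 1}"
    show "(i' j = 0 \<longrightarrow> eps' j = eps' (j + 1)) \<and> (eps' j = 1 \<longrightarrow> i' j \<le> 0) \<and> (eps' j = - 1 \<longrightarrow> i' j \<le> 1)"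
    proof (cases "j < n")
      case True
      then show ?thesis using g j unfolding good_def eps'_def i'_def by auto
    next
      case False
      then have jn: "j = n" "n \<ge> 1" using j by auto
      then obtain p where p: "n = Suc p" by (cases n) auto
      have en: "eps n \<in> {1,-1}" using g jn unfolding good_def by auto
      have ww: "w = xpow (i n) @ ylet (eps n) # nf_word p eps i" using w p by simp
      have z: "ylet e \<in> {Y,Yinv}" "ylet (eps n) \<in> {Y,Yinv}" using ylet_cases e en by auto
      have c1: "i n = 0 \<longrightarrow> eps n = e"
      proof
        assume "i n = 0"
        then have "ylet e # w = ylet e # ylet (eps n) # nf_word p eps i" using ww unfolding xpow_def by simp
        then have "ylet (eps n) \<noteq> linv (ylet e)" using nb unfolding bad_head_iff by auto
        then show "eps n = e" using e en unfolding ylet_def by auto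
      qed
      have c2: "eps n = 1 \<longrightarrow> i n \<le> 0"
      proof
        assume h: "eps n = 1"
        show "i n \<le> 0"
        proof (rule ccontr)
          assume "\<not> i n \<le> 0"
          then have "xpow (i n) = replicate (nat (i n)) X" "nat (i n) \<ge> 1" using xpow_pos by auto
          then have "ylet e # w = ylet e # replicate (nat (i n)) X @ Y # nf_word p eps i"
            "nat (i n) \<ge> 1" using ww h unfolding ylet_def by auto
          then have "bad_head (ylet e # w)" unfolding bad_head_iff using z(1) by blast
          then show False using nb by simp
        qed
      qed
      have c3: "eps n = -1 \<longrightarrow> i n \<le> 1"
      proof
        assume h: "eps n = -1"
        show "i n \<le> 1"
        proof (rule ccontr)
          assume "\<not> i n \<le> 1"
          then have "xpow (i n) = replicate (nat (i n)) X" "nat (i n) \<ge> 2" using xpow_pos by auto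
          then have "ylet e # w = ylet e # replicate (nat (i n)) X @ Yinv # nf_word p eps i"
            "nat (i n) \<ge> 2" using ww h unfolding ylet_def by auto
          then have "bad_head (ylet e # w)" unfolding bad_head_iff using z(1) by blast
          then show False using nb by simp
        qed
      qed
      show ?thesis using c1 c2 c3 jn unfolding eps'_def i'_def by auto
    qed
  qed
  then show ?thesis using eq by blast
qed

lemma dirB: "irreducible_GS w \<Longrightarrow> \<exists>n eps i. good n eps i \<and> w = nf_word n eps i"
proof (induction w)
  case Nil
  have "good 0 (\<lambda>_. 1) (\<lambda>_. 0) \<and> [] = nf_word 0 (\<lambda>_. 1) (\<lambda>_. 0)"
    unfolding good_def xpow_def by simp
  then show ?case by blast
next
  case (Cons a w)
  have irw: "irreducible_GS w" and nb: "\<not> bad_head (a # w)" using Cons.prems irr_Cons by auto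
  obtain n eps i where g: "good n eps i" and w: "w = nf_word n eps i" using Cons.IH irw by blast
  have wsplit: "w = xpow (i n) @ nf_rest n eps i" using w nf_split by simp
  show ?case
  proof (cases a)
    case X
    have "\<not> i n < 0"
    proof
      assume "i n < 0"
      then obtain t where "xpow (i n) = Xinv # t" using xpow_neg by blast
      then have "bad_head (a # w)" unfolding bad_head_iff using X wsplit by auto
      then show False using nb by simp
    qed
    then have "a # w = nf_word n eps (i(n := i n + 1))"
      using X wsplit nf_upd xpow_X by simp
    moreover have "good n eps (i(n := i n + 1))" using g good_upd by simp
    ultimately show ?thesis by blast
  next
    case Xinv
    have "\<not> i n > 0"
    proof
      assume "i n > 0"
      then obtain t where "xpow (i n) = X # t" using xpow_pos' by blast
      then have "bad_head (a # w)" unfolding bad_head_iff using Xinv wsplit by auto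
      then show False using nb by simp
    qed
    then have "a # w = nf_word n eps (i(n := i n - 1))"
      using Xinv wsplit nf_upd xpow_Xinv by simp
    moreover have "good n eps (i(n := i n - 1))" using g good_upd by simp
    ultimately show ?thesis by blast
  next
    case Y
    then have "a = ylet 1" by (simp add: ylet_def)
    then show ?thesis using dirB_y[OF g w, of 1] nb by simp
  next
    case Yinv
    then have "a = ylet (-1)" by (simp add: ylet_def)
    then show ?thesis using dirB_y[OF g w, of "-1"] nb by simp
  qed
qed

theorem lemma2p2:
  shows "NN = {w. \<exists>(n::nat) (eps::nat \<Rightarrow> int) (i::nat \<Rightarrow> int).
            (\<forall>j\<in>{1..n}. eps j \<in> {1, -1}) \<and>
            (\<forall>j\<in>{1..n-1}.
               (i j = 0 \<longrightarrow> eps j = eps (j + 1)) \<and>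
               (eps j = 1 \<longrightarrow> i j \<le> 0) \<and>
               (eps j = -1 \<longrightarrow> i j \<le> 1)) \<and>
            w = nf_word n eps i}"
proof -
  have "NN = {w. \<exists>n eps i. good n eps i \<and> w = nf_word n eps i}"
    unfolding NN_def using dirA dirB by blast
  then show ?thesis unfolding good_def by (simp only: conj_assoc)
qed

end
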